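(* Let $G\in\mathcal{G}_3$ and let $x$ be an interior vertex of $G$, i.e. $S(x)\in\mathcal{S}_2$. For $k\ge0$ let $V_k$ denote the number of complete subgraphs $K_{k+1}$ of $S(x)$. Then the curvature $K(x)=1-\frac{V_0}{2}+\frac{V_1}{3}-\frac{V_2}{4}$ equals $0$.
   Context: All graphs are finite simple graphs $G=(V,E)$. For a vertex $x$, the unit sphere $S(x)$ is the subgraph induced by the neighbors of $x$. A graph is contractible if it is the one-vertex graph $K_1$, or, inductively, if there is a vertex $x$ such that both $S(x)$ and the subgraph induced by $V\setminus\{x\}$ are contractible. Let $\mathcal{G}_0$ be the class of graphs without edges, $\mathcal{S}_0\subset\mathcal{G}_0$ those with exactly two vertices, $\mathcal{B}_0\subset\mathcal{G}_0$ those with exactly one vertex. For $d\ge1$, inductively: $\mathcal{G}_d$ is the class of graphs in which every unit sphere $S(x)$ lies in $\mathcal{S}_{d-1}\cup\mathcal{B}_{d-1}$; the boundary $\delta G$ is the subgraph induced by vertices $x$ with $S(x)\in\mathcal{B}_{d-1}$, and the interior (the other vertices, those with $S(x)\in\mathcal{S}_{d-1}$) is required to be nonempty; $\mathcal{B}_d$ is the class of contractible graphs in $\mathcal{G}_d$ whose boundary lies in $\mathcal{S}_{d-1}$; $\mathcal{S}_d$ is the class of non-contractible graphs in $\mathcal{G}_d$ such that removing any single vertex (with its incident edges) yields a graph in $\mathcal{B}_d$. *)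

theory Defs
  imports Complex_Main
begin

text \<open>A finite simple graph: a finite vertex set together with a symmetric,
irreflexive edge relation on it (edges as ordered pairs in both directions).\<close>

type_synonym 'a graph = "'a set \<times> ('a \<times> 'a) set"

definition verts :: "'a graph \<Rightarrow> 'a set" where "verts G = fst G"
definition edges :: "'a graph \<Rightarrow> ('a \<times> 'a) set" where "edges G = snd G"

definition wf_graph :: "'a graph \<Rightarrow> bool" where
  "wf_graph G \<longleftrightarrow> finite (verts G) \<and> edges G \<subseteq> verts G \<times> verts G
     \<and> sym (edges G) \<and> irrefl (edges G)"

definition induced :: "'a graph \<Rightarrow> 'a set \<Rightarrow> 'a graph" where
  "induced G W = (W \<inter> verts G, edges G \<inter> ((W \<inter> verts G) \<times> (W \<inter> verts G)))"

definition sphere :: "'a graph \<Rightarrow> 'a \<Rightarrow> 'a graph" where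
  "sphere G x = induced G {y. (x, y) \<in> edges G}"

definition delete_vertex :: "'a graph \<Rightarrow> 'a \<Rightarrow> 'a graph" where
  "delete_vertex G x = induced G (verts G - {x})"

inductive contractible :: "'a graph \<Rightarrow> bool" where
  K1: "wf_graph G \<Longrightarrow> verts G = {v} \<Longrightarrow> contractible G"
| step: "wf_graph G \<Longrightarrow> x \<in> verts G \<Longrightarrow> contractible (sphere G x)
          \<Longrightarrow> contractible (delete_vertex G x) \<Longrightarrow> contractible G"

definition gcond :: "('a graph \<Rightarrow> bool) \<Rightarrow> ('a graph \<Rightarrow> bool) \<Rightarrow> 'a graph \<Rightarrow> bool" where
  "gcond Sp Bp G \<longleftrightarrow> wf_graph G
     \<and> (\<forall>x \<in> verts G. Sp (sphere G x) \<or> Bp (sphere G x))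
     \<and> (\<exists>x \<in> verts G. Sp (sphere G x))"

definition boundary :: "('a graph \<Rightarrow> bool) \<Rightarrow> 'a graph \<Rightarrow> 'a graph" where
  "boundary Bp G = induced G {x \<in> verts G. Bp (sphere G x)}"

definition bcond :: "('a graph \<Rightarrow> bool) \<Rightarrow> ('a graph \<Rightarrow> bool) \<Rightarrow> 'a graph \<Rightarrow> bool" where
  "bcond Sp Bp G \<longleftrightarrow> contractible G \<and> gcond Sp Bp G \<and> Sp (boundary Bp G)"

fun Sclass :: "nat \<Rightarrow> 'a graph \<Rightarrow> bool"
and Bclass :: "nat \<Rightarrow> 'a graph \<Rightarrow> bool" where
  "Sclass 0 G \<longleftrightarrow> wf_graph G \<and> edges G = {} \<and> card (verts G) = 2"
| "Bclass 0 G \<longleftrightarrow> wf_graph G \<and> edges G = {} \<and> card (verts G) = 1"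
| "Sclass (Suc d) G \<longleftrightarrow> gcond (Sclass d) (Bclass d) G \<and> \<not> contractible G
     \<and> (\<forall>x \<in> verts G. bcond (Sclass d) (Bclass d) (delete_vertex G x))"
| "Bclass (Suc d) G \<longleftrightarrow> bcond (Sclass d) (Bclass d) G"

fun Gclass :: "nat \<Rightarrow> 'a graph \<Rightarrow> bool" where
  "Gclass 0 G \<longleftrightarrow> wf_graph G \<and> edges G = {}"
| "Gclass (Suc d) G \<longleftrightarrow> gcond (Sclass d) (Bclass d) G"

definition num_cliques :: "'a graph \<Rightarrow> nat \<Rightarrow> nat" where
  "num_cliques H k = card {A. A \<subseteq> verts H \<and> card A = k + 1
      \<and> (\<forall>u \<in> A. \<forall>v \<in> A. u \<noteq> v \<longrightarrow> (u, v) \<in> edges H)}"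

end

theory Submission
  imports Defs
begin

definition clq :: "'a graph \<Rightarrow> 'a set \<Rightarrow> bool" where
  "clq H A \<longleftrightarrow> A \<subseteq> verts H \<and> (\<forall>u\<in>A. \<forall>v\<in>A. u \<noteq> v \<longrightarrow> (u, v) \<in> edges H)"

definition chi :: "'a graph \<Rightarrow> int" where
  "chi H = (\<Sum>A\<in>{A. clq H A \<and> A \<noteq> {}}. (-1)^(card A + 1))"

lemma verts_induced: "verts (induced G W) = W \<inter> verts G"
  by (simp add: induced_def verts_def)
lemma edges_induced: "edges (induced G W) = edges G \<inter> ((W \<inter> verts G) \<times> (W \<inter> verts G))"
  by (simp add: induced_def edges_def)

lemma wf_induced: "wf_graph G \<Longrightarrow> wf_graph (induced G W)"
  unfolding wf_graph_def verts_induced edges_induced sym_def irrefl_def by auto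

lemma wf_sphere: "wf_graph G \<Longrightarrow> wf_graph (sphere G x)"
  unfolding sphere_def by (rule wf_induced)
lemma wf_delete: "wf_graph G \<Longrightarrow> wf_graph (delete_vertex G x)"
  unfolding delete_vertex_def by (rule wf_induced)

lemma verts_sphere: "verts (sphere G x) = {y \<in> verts G. (x,y) \<in> edges G}"
  unfolding sphere_def verts_induced by auto
lemma edges_sphere: "edges (sphere G x) = edges G \<inter> (verts (sphere G x) \<times> verts (sphere G x))"
  unfolding sphere_def verts_induced edges_induced by auto
lemma verts_delete: "verts (delete_vertex G x) = verts G - {x}"
  unfolding delete_vertex_def verts_induced by auto
lemma edges_delete: "edges (delete_vertex G x) = edges G \<inter> ((verts G - {x}) \<times> (verts G - {x}))"
  unfolding delete_vertex_def verts_induced edges_induced by auto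

lemma finite_cliques: "wf_graph H \<Longrightarrow> finite {A. clq H A \<and> P A}"
proof -
  assume "wf_graph H"
  then have "finite (Pow (verts H))" by (simp add: wf_graph_def)
  then show ?thesis by (rule finite_subset[rotated]) (auto simp: clq_def)
qed

lemma chi_step:
  assumes wf: "wf_graph H" and x: "x \<in> verts H"
  shows "chi H = chi (delete_vertex H x) + 1 - chi (sphere H x)"
proof -
  let ?S = "{A. clq H A \<and> A \<noteq> {}}"
  have fin: "finite ?S" using finite_cliques[OF wf] .
  have finV: "finite (verts H)" using wf by (simp add: wf_graph_def)
  have irr: "(x,x) \<notin> edges H" using wf by (auto simp: wf_graph_def irrefl_def)
  have symm: "\<And>a b. (a,b) \<in> edges H \<Longrightarrow> (b,a) \<in> edges H"
    using wf by (auto simp: wf_graph_def sym_def)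
  have s1: "{A \<in> ?S. x \<notin> A} = {A. clq (delete_vertex H x) A \<and> A \<noteq> {}}"
    unfolding clq_def verts_delete edges_delete by auto
  have s2: "{A \<in> ?S. x \<in> A} = insert x ` {B. clq (sphere H x) B}"
  proof (rule set_eqI, rule iffI)
    fix A assume "A \<in> {A \<in> ?S. x \<in> A}"
    then have A: "clq H A" "x \<in> A" by auto
    have "clq (sphere H x) (A - {x})"
      using A unfolding clq_def verts_sphere edges_sphere by auto
    moreover have "A = insert x (A - {x})" using A by auto
    ultimately show "A \<in> insert x ` {B. clq (sphere H x) B}" by blast
  next
    fix A assume "A \<in> insert x ` {B. clq (sphere H x) B}"
    then obtain B where B: "clq (sphere H x) B" "A = insert x B" by auto
    have "clq H A" using B x symm unfolding clq_def verts_sphere edges_sphere by auto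
    then show "A \<in> {A \<in> ?S. x \<in> A}" using B by auto
  qed
  have xnot: "\<And>B. clq (sphere H x) B \<Longrightarrow> x \<notin> B"
    using irr unfolding clq_def verts_sphere by auto
  have finB: "\<And>B. clq (sphere H x) B \<Longrightarrow> finite B"
    using finV unfolding clq_def verts_sphere by (auto intro: finite_subset)
  have inj: "inj_on (insert x) {B. clq (sphere H x) B}"
    by (rule inj_onI) (metis xnot insert_ident mem_Collect_eq)
  have "chi H = (\<Sum>A\<in>{A \<in> ?S. x \<notin> A}. (-1)^(card A + 1)) + (\<Sum>A\<in>{A \<in> ?S. x \<in> A}. (-1)^(card A + 1))"
  proof -
    have e: "?S = {A \<in> ?S. x \<notin> A} \<union> {A \<in> ?S. x \<in> A}" by auto
    show ?thesis unfolding chi_def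
      by (subst e, rule sum.union_disjoint) (use finite_cliques[OF wf] in auto)
  qed
  also have "(\<Sum>A\<in>{A \<in> ?S. x \<notin> A}. (-1)^(card A + 1)) = chi (delete_vertex H x)"
    unfolding chi_def s1 ..
  also have "(\<Sum>A\<in>{A \<in> ?S. x \<in> A}. (-1::int)^(card A + 1)) = (\<Sum>B\<in>{B. clq (sphere H x) B}. (-1)^(card B))"
    unfolding s2 using inj by (simp add: sum.reindex xnot finB)
  also have "{B. clq (sphere H x) B} = insert {} {B. clq (sphere H x) B \<and> B \<noteq> {}}"
    by (auto simp: clq_def)
  also have "(\<Sum>B\<in>insert {} {B. clq (sphere H x) B \<and> B \<noteq> {}}. (-1::int)^(card B)) = 1 - chi (sphere H x)"
    using finite_cliques[OF wf_sphere[OF wf]]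
    by (simp add: chi_def sum_negf[symmetric])
  finally show ?thesis by simp
qed


lemma chi_edgeless:
  assumes wf: "wf_graph H" and e: "edges H = {}"
  shows "chi H = int (card (verts H))"
proof -
  have "{A. clq H A \<and> A \<noteq> {}} = (\<lambda>v. {v}) ` verts H"
  proof (rule set_eqI, rule iffI)
    fix A assume A: "A \<in> {A. clq H A \<and> A \<noteq> {}}"
    then obtain v where v: "v \<in> A" by auto
    have "A = {v}" using A v e unfolding clq_def by auto
    then show "A \<in> (\<lambda>v. {v}) ` verts H" using A v unfolding clq_def by auto
  qed (auto simp: clq_def)
  then show ?thesis unfolding chi_def by (simp add: sum.reindex)
qed

lemma chi_contractible: "contractible H \<Longrightarrow> chi H = 1"
proof (induction rule: contractible.induct)
  case (K1 G v)
  then show ?case using chi_step[of G v]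
  proof -
    have "{A. clq G A \<and> A \<noteq> {}} = {{v}}" using K1 unfolding clq_def by auto
    then show ?thesis unfolding chi_def by simp
  qed
next
  case (step G x)
  then show ?case using chi_step[of G x] by simp
qed

lemma Sclass_chi: "Sclass d H \<Longrightarrow> wf_graph H \<and> chi H = 1 + (-1)^d"
proof (induction d arbitrary: H)
  case 0
  then show ?case using chi_edgeless[of H] by simp
next
  case (Suc d)
  then obtain y where y: "y \<in> verts H" "Sclass d (sphere H y)" and wf: "wf_graph H"
    and b: "bcond (Sclass d) (Bclass d) (delete_vertex H y)"
    by (auto simp: gcond_def)
  have "chi (delete_vertex H y) = 1" using b by (intro chi_contractible) (simp add: bcond_def)
  moreover have "chi (sphere H y) = 1 + (-1)^d" using Suc.IH y(2) by blast
  ultimately show ?case using chi_step[OF wf y(1)] wf by simp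
qed

lemma Bclass_chi: "Bclass d H \<Longrightarrow> chi H = 1"
  by (cases d) (auto simp: chi_edgeless bcond_def chi_contractible)

lemma Sclass_sphere:
  assumes "Sclass (Suc d) H" and v: "v \<in> verts H"
  shows "Sclass d (sphere H v)"
proof (rule ccontr)
  assume n: "\<not> Sclass d (sphere H v)"
  have g: "gcond (Sclass d) (Bclass d) H" and b: "bcond (Sclass d) (Bclass d) (delete_vertex H v)"
    using assms by auto
  then have "Bclass d (sphere H v)" using n v by (auto simp: gcond_def)
  then have "chi (sphere H v) = 1" by (rule Bclass_chi)
  moreover have "chi (delete_vertex H v) = 1" using b by (intro chi_contractible) (simp add: bcond_def)
  moreover have "wf_graph H" "chi H = 1 + (-1)^Suc d" using Sclass_chi[OF assms(1)] by auto
  ultimately show False using chi_step[of H v] v by (cases "even d") auto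
qed


lemma sphere2_local:
  assumes S: "Sclass (Suc (Suc 0)) S" and u: "u \<in> verts S" and v: "v \<in> verts S"
    and uv: "(u,v) \<in> edges S"
  shows "card {w \<in> verts S. (u,w) \<in> edges S \<and> (v,w) \<in> edges S} = 2"
    and "\<And>c d. c \<in> verts S \<Longrightarrow> d \<in> verts S \<Longrightarrow> (u,c) \<in> edges S \<Longrightarrow> (v,c) \<in> edges S
          \<Longrightarrow> (u,d) \<in> edges S \<Longrightarrow> (v,d) \<in> edges S \<Longrightarrow> (c,d) \<notin> edges S"
proof -
  have s1: "Sclass (Suc 0) (sphere S u)" using Sclass_sphere[OF S u] .
  have vs: "v \<in> verts (sphere S u)" using v uv by (simp add: verts_sphere)
  have s0: "Sclass 0 (sphere (sphere S u) v)" using Sclass_sphere[OF s1 vs] .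
  have VT: "verts (sphere (sphere S u) v) = {w \<in> verts S. (u,w) \<in> edges S \<and> (v,w) \<in> edges S}"
    using vs by (auto simp: verts_sphere edges_sphere)
  show "card {w \<in> verts S. (u,w) \<in> edges S \<and> (v,w) \<in> edges S} = 2"
    using s0 VT by simp
  fix c d assume c: "c \<in> verts S" "(u,c) \<in> edges S" "(v,c) \<in> edges S"
    and d: "d \<in> verts S" "(u,d) \<in> edges S" "(v,d) \<in> edges S"
  show "(c,d) \<notin> edges S"
  proof
    assume cd: "(c,d) \<in> edges S"
    have "(c,d) \<in> edges (sphere (sphere S u) v)"
      using c d cd vs by (auto simp: verts_sphere edges_sphere)
    then show False using s0 by simp
  qed
qed

theorem mainTheorem4:
  fixes G :: "'a graph" and x :: 'a
  assumes "Gclass 3 G" and "x \<in> verts G" and "Sclass 2 (sphere G x)"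
  shows "1 - real (num_cliques (sphere G x) 0) / 2 + real (num_cliques (sphere G x) 1) / 3
           - real (num_cliques (sphere G x) 2) / 4 = 0"
proof -
  define S where "S = sphere G x"
  have SS: "Sclass (Suc (Suc 0)) S" using assms(3) by (simp add: S_def numeral_2_eq_2)
  have wf: "wf_graph S" and chiS: "chi S = 2" using Sclass_chi[OF SS] by auto
  have finV: "finite (verts S)" using wf by (simp add: wf_graph_def)
  have irr: "\<And>a. (a,a) \<notin> edges S" using wf by (auto simp: wf_graph_def irrefl_def)
  have symm: "\<And>a b. (a,b) \<in> edges S \<Longrightarrow> (b,a) \<in> edges S"
    using wf by (auto simp: wf_graph_def sym_def)
  have inV: "\<And>a b. (a,b) \<in> edges S \<Longrightarrow> a \<in> verts S \<and> b \<in> verts S"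
    using wf by (auto simp: wf_graph_def)
  define C where "C k = {A. clq S A \<and> card A = k}" for k
  have nc: "num_cliques S k = card (C (k+1))" for k
    unfolding num_cliques_def C_def clq_def by (rule arg_cong[where f=card]) auto
  have finC: "finite (C k)" for k unfolding C_def by (rule finite_cliques[OF wf])
  have finA: "clq S A \<Longrightarrow> finite A" for A using finV by (auto simp: clq_def intro: finite_subset)
  have le3: "card A \<le> 3" if A: "clq S A" for A
  proof (rule ccontr)
    assume "\<not> card A \<le> 3"
    then obtain B where B: "B \<subseteq> A" "card B = 4" proof -
      have "4 \<le> card A" using \<open>\<not> card A \<le> 3\<close> by simp
      then show ?thesis using that obtain_subset_with_card_n by metis
    qed
    then obtain a b c d where "B = {a,b,c,d}" "a \<noteq> b" "a \<noteq> c" "a \<noteq> d" "b \<noteq> c" "b \<noteq> d" "c \<noteq> d"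
      by (auto simp: card_Suc_eq numeral_eq_Suc)
    then have abcd: "a \<in> A" "b \<in> A" "c \<in> A" "d \<in> A" "a \<noteq> b" "a \<noteq> c" "a \<noteq> d" "b \<noteq> c" "b \<noteq> d" "c \<noteq> d"
      using B by auto
    have E: "\<And>p q. p \<in> A \<Longrightarrow> q \<in> A \<Longrightarrow> p \<noteq> q \<Longrightarrow> (p,q) \<in> edges S" using A by (auto simp: clq_def)
    have V: "\<And>p. p \<in> A \<Longrightarrow> p \<in> verts S" using A by (auto simp: clq_def)
    show False
      using sphere2_local(2)[OF SS V[OF abcd(1)] V[OF abcd(2)] E[OF abcd(1,2,5)]
          V[OF abcd(3)] V[OF abcd(4)]] E abcd by metis
  qed
  have split: "{A. clq S A \<and> A \<noteq> {}} = C 1 \<union> C 2 \<union> C 3"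
  proof (rule set_eqI, rule iffI)
    fix A assume "A \<in> {A. clq S A \<and> A \<noteq> {}}"
    then have "clq S A" "card A \<noteq> 0" using finA by auto
    then show "A \<in> C 1 \<union> C 2 \<union> C 3" using le3[of A] unfolding C_def by auto
  qed (auto simp: C_def)
  have sumC: "(\<Sum>A\<in>C k. (-1::int)^(card A + 1)) = (-1)^(k+1) * int (card (C k))" for k
    by (simp add: C_def)
  have "chi S = (\<Sum>A\<in>C 1. (-1::int)^(card A + 1)) + (\<Sum>A\<in>C 2. (-1)^(card A + 1)) + (\<Sum>A\<in>C 3. (-1)^(card A + 1))"
  proof -
    have a: "(\<Sum>A\<in>C 1 \<union> C 2 \<union> C 3. (-1::int)^(card A + 1)) = (\<Sum>A\<in>C 1 \<union> C 2. (-1)^(card A + 1)) + (\<Sum>A\<in>C 3. (-1)^(card A + 1))"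
      by (rule sum.union_disjoint) (auto simp: finC, auto simp: C_def)
    have b: "(\<Sum>A\<in>C 1 \<union> C 2. (-1::int)^(card A + 1)) = (\<Sum>A\<in>C 1. (-1)^(card A + 1)) + (\<Sum>A\<in>C 2. (-1)^(card A + 1))"
      by (rule sum.union_disjoint) (auto simp: finC, auto simp: C_def)
    show ?thesis unfolding chi_def split a b ..
  qed
  then have euler: "int (card (C 1)) - int (card (C 2)) + int (card (C 3)) = 2"
    using chiS unfolding sumC by simp
  have dc: "(\<Sum>t\<in>C 3. card {e \<in> C 2. e \<subseteq> t}) = (\<Sum>e\<in>C 2. card {t \<in> C 3. e \<subseteq> t})"
    using sum.swap_restrict[OF finC[of 3] finC[of 2], where g="\<lambda>_ _. 1::nat" and R="\<lambda>t e. e \<subseteq> t"]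
    by (simp add: conj_commute)
  have t3: "card {e \<in> C 2. e \<subseteq> t} = 3" if t: "t \<in> C 3" for t
  proof -
    have ft: "finite t" using t finA by (auto simp: C_def)
    have "{e \<in> C 2. e \<subseteq> t} = {e. e \<subseteq> t \<and> card e = 2}"
      using t unfolding C_def clq_def by auto
    then show ?thesis using n_subsets[OF ft, of 2] t by (simp add: C_def numeral_eq_Suc)
  qed
  have e2: "card {t \<in> C 3. e \<subseteq> t} = 2" if e: "e \<in> C 2" for e
  proof -
    obtain u v where uv: "e = {u,v}" "u \<noteq> v" using e by (auto simp: C_def card_2_iff)
    have E: "(u,v) \<in> edges S" and V: "u \<in> verts S" "v \<in> verts S"
      using e uv by (auto simp: C_def clq_def)
    define W where "W = {w \<in> verts S. (u,w) \<in> edges S \<and> (v,w) \<in> edges S}"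
    have cW: "card W = 2" unfolding W_def by (rule sphere2_local(1)[OF SS V E])
    have Wuv: "w \<in> W \<Longrightarrow> w \<noteq> u \<and> w \<noteq> v" for w using irr by (auto simp: W_def)
    have eq: "{t \<in> C 3. e \<subseteq> t} = (\<lambda>w. insert w {u,v}) ` W"
    proof (rule set_eqI, rule iffI)
      fix t assume t: "t \<in> {t \<in> C 3. e \<subseteq> t}"
      then have ft: "finite t" using finA by (auto simp: C_def)
      have "card (t - {u,v}) = 1" using t uv ft by (simp add: C_def card_Diff_subset)
      then obtain w where w: "t - {u,v} = {w}" by (auto simp: card_Suc_eq)
      then have teq: "t = insert w {u,v}" using t uv by auto
      have "w \<in> W" using t teq w unfolding W_def C_def clq_def by (auto intro: symm)
      then show "t \<in> (\<lambda>w. insert w {u,v}) ` W" using teq by auto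
    next
      fix t assume "t \<in> (\<lambda>w. insert w {u,v}) ` W"
      then obtain w where w: "w \<in> W" "t = insert w {u,v}" by auto
      have "clq S t" using w E V symm unfolding W_def clq_def by auto
      moreover have "card t = 3" using w Wuv[OF w(1)] uv by auto
      ultimately show "t \<in> {t \<in> C 3. e \<subseteq> t}" using uv w by (auto simp: C_def)
    qed
    have "inj_on (\<lambda>w. insert w {u,v}) W"
      by (rule inj_onI) (metis Wuv insert_iff singletonD)
    then show ?thesis using eq cW by (simp add: card_image)
  qed
  have "3 * card (C 3) = 2 * card (C 2)"
    using dc t3 e2 by simp
  then have r1: "3 * real (card (C 3)) = 2 * real (card (C 2))"
    by (metis of_nat_mult of_nat_numeral)
  have r2: "real (card (C 1)) - real (card (C 2)) + real (card (C 3)) = 2"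
    using arg_cong[OF euler, of real_of_int] by simp
  have g: "num_cliques S 0 = card (C 1)" "num_cliques S 1 = card (C 2)" "num_cliques S 2 = card (C 3)"
    unfolding nc by (simp_all add: numeral_2_eq_2 numeral_3_eq_3)
  show ?thesis unfolding S_def[symmetric] g using r1 r2 by linarith
qed

end
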